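(* Let $\mathcal F$ be a family of subsets of an ordinal $\theta$, and suppose there is an ordinal $\alpha\le\theta$ that cannot be written as a countable union of sets orthogonal to $\mathcal F$. Let $\alpha$ be the least such ordinal. Then $\alpha$ has uncountable cofinality.
   Context: A set $B$ is orthogonal to $\mathcal F$ if $B\cap x$ is finite for every $x\in\mathcal F$. An ordinal $\alpha$ is identified with the set of smaller ordinals. *)

theory Defs
  imports Main "HOL-Library.Countable_Set"
begin

text \<open>Ordinals are modelled as elements of a well-ordered type; the ordinal a is
identified with its initial segment {..<a} (the set of smaller ordinals).\<close>

definition orthogonal :: "'a set \<Rightarrow> 'a set set \<Rightarrow> bool" where
  "orthogonal B F \<longleftrightarrow> (\<forall>x\<in>F. finite (B \<inter> x))"

definition countable_union_orthogonal :: "'a set set \<Rightarrow> 'a set \<Rightarrow> bool" where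
  "countable_union_orthogonal F A \<longleftrightarrow>
     (\<exists>\<C>. countable \<C> \<and> (\<forall>B\<in>\<C>. orthogonal B F) \<and> \<Union>\<C> = A)"

definition cofinal_in :: "'a::wellorder set \<Rightarrow> 'a \<Rightarrow> bool" where
  "cofinal_in S a \<longleftrightarrow> S \<subseteq> {..<a} \<and> (\<forall>b<a. \<exists>s\<in>S. b \<le> s)"

definition uncountable_cofinality :: "'a::wellorder \<Rightarrow> bool" where
  "uncountable_cofinality a \<longleftrightarrow> \<not> (\<exists>S. countable S \<and> cofinal_in S a)"

end

theory Submission
  imports Defs
begin

theorem proposition2p1:
  fixes F :: "'a::wellorder set set" and \<theta> \<alpha> :: 'a
  assumes "\<forall>x\<in>F. x \<subseteq> {..<\<theta>}"
    and "\<alpha> \<le> \<theta>"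
    and "\<not> countable_union_orthogonal F {..<\<alpha>}"
    and "\<forall>\<beta><\<alpha>. countable_union_orthogonal F {..<\<beta>}"
  shows "uncountable_cofinality \<alpha>"
  unfolding uncountable_cofinality_def
proof
  assume "\<exists>S. countable S \<and> cofinal_in S \<alpha>"
  then obtain S where S: "countable S" "S \<subseteq> {..<\<alpha>}" "\<forall>b<\<alpha>. \<exists>s\<in>S. b \<le> s"
    unfolding cofinal_in_def by blast
  have "\<forall>s\<in>S. \<exists>C. countable C \<and> (\<forall>B\<in>C. orthogonal B F) \<and> \<Union>C = {..<s}"
    using assms(4) S(2) unfolding countable_union_orthogonal_def by auto
  then obtain C where C: "\<And>s. s\<in>S \<Longrightarrow> countable (C s) \<and> (\<forall>B\<in>C s. orthogonal B F) \<and> \<Union>(C s) = {..<s}"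
    by metis
  define D where "D = (\<Union>s\<in>S. insert {s} (C s))"
  have "countable D" unfolding D_def
    by (rule countable_UN[OF S(1)]) (simp add: C)
  moreover have "\<forall>B\<in>D. orthogonal B F"
  proof
    fix B assume "B \<in> D"
    then obtain s where s: "s \<in> S" "B = {s} \<or> B \<in> C s" unfolding D_def by blast
    show "orthogonal B F"
    proof (cases "B = {s}")
      case True thus ?thesis unfolding orthogonal_def by simp
    next
      case False thus ?thesis using s C[OF s(1)] by blast
    qed
  qed
  moreover have "\<Union>D = {..<\<alpha>}"
  proof
    show "\<Union>D \<subseteq> {..<\<alpha>}"
    proof
      fix b assume "b \<in> \<Union>D"
      then obtain s where s: "s \<in> S" "b = s \<or> b \<in> \<Union>(C s)" unfolding D_def by blast
      have "s < \<alpha>" using s(1) S(2) by blast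
      moreover have "b \<le> s" using s(2) C[OF s(1)] by auto
      ultimately show "b \<in> {..<\<alpha>}" by simp
    qed
  next
    show "{..<\<alpha>} \<subseteq> \<Union>D"
    proof
      fix b assume "b \<in> {..<\<alpha>}"
      then obtain s where s: "s \<in> S" "b \<le> s" using S(3) by auto
      show "b \<in> \<Union>D"
      proof (cases "b = s")
        case True thus ?thesis using s unfolding D_def by auto
      next
        case False
        hence "b \<in> \<Union>(C s)" using C[OF s(1)] s(2) by auto
        thus ?thesis using s unfolding D_def by auto
      qed
    qed
  qed
  ultimately show False using assms(3) unfolding countable_union_orthogonal_def by blast
qed

end
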